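(* For every $n\ge2$: - the total number of pairs $(T,\ell)$ with $T$ a binary tree on $n$ vertices and $\ell$ a leaf of $T$ is $\binom{2n-2}{n-1}$; - the total, over these pairs, of the distance from the root to $\ell$ is $4^{n-1}-\binom{2n-2}{n-1}$. Hence the expected root-to-leaf distance is $$\frac{(2n-2)!!}{(2n-3)!!}-1=\sqrt{\pi n}-1+O\Bigl(\frac1{\sqrt n}\Bigr).$$
   Context: Binary trees are rooted trees in which every vertex has at most one left child and at most one right child, so a single child is designated left or right. The size is the number of vertices, and a leaf is a vertex with no children. The double factorials are $(2m)!!=2\cdot4\cdots(2m)$ and $(2m-1)!!=1\cdot3\cdots(2m-1)$. *)

theory Defs
  imports Complex_Main "HOL-Library.Landau_Symbols"
begin

text \<open>Binary trees: every vertex has an optional left and an optional right child.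
  BEmpty is the empty (absent) subtree; BNode l r is a vertex with left subtree l
  and right subtree r.\<close>
datatype btree = BEmpty | BNode btree btree

fun nverts :: "btree \<Rightarrow> nat" where
  "nverts BEmpty = 0"
| "nverts (BNode l r) = Suc (nverts l + nverts r)"

definition trees :: "nat \<Rightarrow> btree set" where
  "trees n = {t. nverts t = n}"

text \<open>Vertices are identified by their path from the root (False = go left,
  True = go right); the distance from the root is the length of the path.\<close>
fun leaves :: "btree \<Rightarrow> bool list set" where
  "leaves BEmpty = {}"
| "leaves (BNode l r) =
     (if l = BEmpty \<and> r = BEmpty then {[]}
      else Cons False ` leaves l \<union> Cons True ` leaves r)"

definition tree_leaf_pairs :: "nat \<Rightarrow> (btree \<times> bool list) set" where
  "tree_leaf_pairs n = {(t, p). t \<in> trees n \<and> p \<in> leaves t}"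

definition total_leaf_depth :: "nat \<Rightarrow> nat" where
  "total_leaf_depth n = (\<Sum>(t, p)\<in>tree_leaf_pairs n. length p)"

definition expected_leaf_depth :: "nat \<Rightarrow> real" where
  "expected_leaf_depth n = real (total_leaf_depth n) / real (card (tree_leaf_pairs n))"

text \<open>Double factorials (2m)!! and (2m-1)!!.\<close>
definition even_dfact :: "nat \<Rightarrow> nat" where
  "even_dfact m = (\<Prod>i=1..m. 2 * i)"

definition odd_dfact :: "nat \<Rightarrow> nat" where
  "odd_dfact m = (\<Prod>i=1..m. 2 * i - 1)"

end

theory Submission
  imports Defs "HOL-Computational_Algebra.Formal_Power_Series" "HOL-Analysis.Gamma_Function"
begin


lemma trees_0: "trees 0 = {BEmpty}"
  unfolding trees_def by (auto elim: nverts.elims)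

lemma trees_Suc: "trees (Suc n) = (\<lambda>(i,(l,r)). BNode l r) ` (SIGMA i:{..n}. trees i \<times> trees (n-i))"
proof (intro equalityI subsetI)
  fix t assume "t \<in> trees (Suc n)"
  then obtain l r where t: "t = BNode l r" and s: "nverts l + nverts r = n"
    unfolding trees_def by (cases t) auto
  then show "t \<in> (\<lambda>(i,(l,r)). BNode l r) ` (SIGMA i:{..n}. trees i \<times> trees (n-i))"
    unfolding trees_def by (intro image_eqI[where x="(nverts l, (l, r))"]) auto
qed (auto simp: trees_def)

lemma inj_trees_Suc: "inj_on (\<lambda>(i,(l,r)). BNode l r) (SIGMA i:{..n}. trees i \<times> trees (n-i))"
  by (auto simp: inj_on_def trees_def)

lemma finite_trees: "finite (trees n)"
proof (induction n rule: less_induct)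
  case (less n)
  show ?case
  proof (cases n)
    case 0 then show ?thesis by (simp add: trees_0)
  next
    case (Suc m)
    then show ?thesis unfolding Suc trees_Suc using less Suc by (intro finite_imageI finite_SigmaI) auto
  qed
qed

lemma sum_trees_Suc:
  "sum f (trees (Suc n)) = (\<Sum>i\<le>n. \<Sum>l\<in>trees i. \<Sum>r\<in>trees (n-i). f (BNode l r))"
proof -
  have "sum f (trees (Suc n)) = (\<Sum>x\<in>(SIGMA i:{..n}. trees i \<times> trees (n-i)). f ((\<lambda>(i,(l,r)). BNode l r) x))"
    unfolding trees_Suc by (subst sum.reindex[OF inj_trees_Suc]) (simp add: comp_def)
  also have "\<dots> = (\<Sum>i\<le>n. \<Sum>x\<in>trees i \<times> trees (n-i). (\<lambda>(l,r). f (BNode l r)) x)"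
    by (subst sum.Sigma) (auto simp: finite_trees split_def intro!: sum.cong)
  also have "\<dots> = (\<Sum>i\<le>n. \<Sum>l\<in>trees i. \<Sum>r\<in>trees (n-i). f (BNode l r))"
    by (simp add: sum.cartesian_product)
  finally show ?thesis .
qed

lemma finite_leaves: "finite (leaves t)"
  by (induction t) auto

definition D :: "btree \<Rightarrow> nat" where "D t = (\<Sum>p\<in>leaves t. length p)"

lemma leaves_BEmpty_D: "D BEmpty = 0" "card (leaves BEmpty) = 0"
  by (auto simp: D_def)

lemma card_leaves_node:
  assumes "\<not> (l = BEmpty \<and> r = BEmpty)"
  shows "card (leaves (BNode l r)) = card (leaves l) + card (leaves r)"
proof -
  have "card (leaves (BNode l r)) = card (Cons False ` leaves l) + card (Cons True ` leaves r)"
    using assms by (simp, intro card_Un_disjoint) (auto simp: finite_leaves)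
  then show ?thesis by (simp add: card_image)
qed

lemma D_node:
  assumes "\<not> (l = BEmpty \<and> r = BEmpty)"
  shows "D (BNode l r) = D l + card (leaves l) + D r + card (leaves r)"
proof -
  have "D (BNode l r) = sum length (Cons False ` leaves l) + sum length (Cons True ` leaves r)"
    unfolding D_def using assms by (simp, intro sum.union_disjoint) (auto simp: finite_leaves)
  also have "\<dots> = (\<Sum>p\<in>leaves l. length p + 1) + (\<Sum>p\<in>leaves r. length p + 1)"
    by (simp add: sum.reindex)
  also have "\<dots> = D l + card (leaves l) + D r + card (leaves r)"
    by (simp only: sum.distrib D_def card_eq_sum)
  finally show ?thesis .
qed

definition CC :: "nat \<Rightarrow> nat" where "CC n = card (trees n)"
definition AA :: "nat \<Rightarrow> nat" where "AA n = (\<Sum>t\<in>trees n. card (leaves t))"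
definition BB :: "nat \<Rightarrow> nat" where "BB n = (\<Sum>t\<in>trees n. D t)"

lemma card_pairs: "card (tree_leaf_pairs n) = AA n"
proof -
  have "tree_leaf_pairs n = Sigma (trees n) leaves"
    unfolding tree_leaf_pairs_def by auto
  then show ?thesis unfolding AA_def
    by (simp add: card_SigmaI finite_trees finite_leaves)
qed

lemma total_depth: "total_leaf_depth n = BB n"
proof -
  have "tree_leaf_pairs n = Sigma (trees n) leaves"
    unfolding tree_leaf_pairs_def by auto
  then show ?thesis unfolding BB_def total_leaf_depth_def D_def
    by (simp add: sum.Sigma finite_trees finite_leaves)
qed

lemma CC_0: "CC 0 = 1" by (simp add: CC_def trees_0)
lemma AA_0: "AA 0 = 0" by (simp add: AA_def trees_0)
lemma BB_0: "BB 0 = 0" by (simp add: BB_def trees_0 D_def)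
lemma AA_1: "AA 1 = 1" by (simp add: AA_def sum_trees_Suc[of _ 0, simplified] trees_0)
lemma BB_1: "BB 1 = 0" by (simp add: BB_def sum_trees_Suc[of _ 0, simplified] trees_0 D_def)

lemma CC_Suc: "CC (Suc n) = (\<Sum>i\<le>n. CC i * CC (n-i))"
proof -
  have "CC (Suc n) = (\<Sum>t\<in>trees (Suc n). 1)" by (simp add: CC_def)
  also have "\<dots> = (\<Sum>i\<le>n. CC i * CC (n-i))" unfolding sum_trees_Suc by (simp add: CC_def)
  finally show ?thesis .
qed

lemma nonempty_node: "l \<in> trees i \<Longrightarrow> r \<in> trees (n - i) \<Longrightarrow> i \<le> n \<Longrightarrow> n \<ge> 1 \<Longrightarrow> \<not> (l = BEmpty \<and> r = BEmpty)"
  by (auto simp: trees_def)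

lemma double_sum: "finite A \<Longrightarrow> finite B \<Longrightarrow>
  (\<Sum>l\<in>A. \<Sum>r\<in>B. f l + g r) = sum f A * card B + card A * (sum g B :: nat)"
  by (simp add: sum.distrib sum_distrib_right sum_distrib_left mult.commute)

lemma AA_Suc: assumes "n \<ge> 1"
  shows "AA (Suc n) = (\<Sum>i\<le>n. AA i * CC (n-i) + CC i * AA (n-i))"
  unfolding AA_def
  apply (subst sum_trees_Suc)
  apply (rule sum.cong[OF refl])
  apply (subst sum.cong[OF refl sum.cong[OF refl card_leaves_node]])
  using assms nonempty_node apply blast
  apply (subst double_sum)
  apply (simp_all add: finite_trees CC_def)
  done

lemma BB_Suc: assumes "n \<ge> 1"
  shows "BB (Suc n) = (\<Sum>i\<le>n. (BB i + AA i) * CC (n-i) + CC i * (BB (n-i) + AA (n-i)))"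
  unfolding BB_def sum_trees_Suc
proof (rule sum.cong[OF refl])
  fix i assume i: "i \<in> {..n}"
  have "(\<Sum>l\<in>trees i. \<Sum>r\<in>trees (n-i). D (BNode l r)) =
        (\<Sum>l\<in>trees i. \<Sum>r\<in>trees (n-i). (D l + card (leaves l)) + (D r + card (leaves r)))"
    using assms i nonempty_node by (intro sum.cong refl) (auto simp: D_node)
  also have "\<dots> = (sum D (trees i) + AA i) * CC (n-i) + CC i * (sum D (trees (n-i)) + AA (n-i))"
    by (subst double_sum) (simp_all add: finite_trees CC_def AA_def sum.distrib)
  finally show "(\<Sum>l\<in>trees i. \<Sum>r\<in>trees (n-i). D (BNode l r)) =
        (sum D (trees i) + AA i) * CC (n-i) + CC i * (sum D (trees (n-i)) + AA (n-i))" .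
qed



lemma cb: "Suc n * ((2*Suc n) choose Suc n) = (4*n+2) * ((2*n) choose n)"
proof -
  have 1: "Suc n * (Suc (Suc (2*n)) choose Suc n) = Suc (Suc (2*n)) * (Suc (2*n) choose n)"
    by (rule Suc_times_binomial)
  have 2: "(Suc (2*n) - n) * (Suc (2*n) choose n) = Suc (2*n) * ((Suc (2*n) - 1) choose n)"
    by (rule binomial_absorb_comp)
  have 3: "Suc (2*n) - n = Suc n" by simp
  from 1 have "Suc n * ((2*Suc n) choose Suc n) = 2 * (Suc n * (Suc (2*n) choose n))" by simp
  also have "\<dots> = 2 * (Suc (2*n) * ((2*n) choose n))" using 2 3 by simp
  finally show ?thesis by simp
qed

definition cf :: "real fps" where "cf = Abs_fps (\<lambda>n. real (CC n))"
definition af :: "real fps" where "af = Abs_fps (\<lambda>n. real (AA n))"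
definition df :: "real fps" where "df = Abs_fps (\<lambda>n. real (BB n))"
definition bf :: "real fps" where "bf = Abs_fps (\<lambda>n. real ((2*n) choose n))"
definition gf :: "real fps" where "gf = Abs_fps (\<lambda>n. 4^n)"

lemma cf_eq: "cf = 1 + fps_X * cf^2"
proof (rule fps_ext)
  fix n show "fps_nth cf n = fps_nth (1 + fps_X * cf^2) n"
    apply (cases n)
     apply (simp_all add: cf_def CC_0 CC_Suc power2_eq_square)
    apply (simp add: fps_mult_nth atLeast0AtMost cf_def)
    done
qed

lemma af_eq: "af = fps_X + fps_X * (af*cf + cf*af)"
proof (rule fps_ext)
  fix n show "fps_nth af n = fps_nth (fps_X + fps_X * (af*cf + cf*af)) n"
  proof (cases n)
    case 0 then show ?thesis by (simp add: af_def AA_0)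
  next
    case (Suc m)
    show ?thesis
    proof (cases m)
      case 0 then show ?thesis using Suc by (simp add: af_def cf_def AA_0 AA_1[unfolded One_nat_def] fps_mult_nth)
    next
      case (Suc k)
      have e: "fps_nth (fps_X + fps_X * (af*cf + cf*af)) n = fps_nth (af*cf + cf*af) (Suc k)"
        using \<open>n = Suc m\<close> Suc by simp
      have e2: "fps_nth (af*cf + cf*af) (Suc k) = (\<Sum>i=0..Suc k. real (AA i) * real (CC (Suc k - i))) + (\<Sum>i=0..Suc k. real (CC i) * real (AA (Suc k - i)))"
        by (simp only: fps_add_nth fps_mult_nth af_def cf_def fps_nth_Abs_fps)
      have p: "1 \<le> Suc k" by simp
      have e3: "real (AA (Suc (Suc k))) = (\<Sum>i=0..Suc k. real (AA i) * real (CC (Suc k - i))) + (\<Sum>i=0..Suc k. real (CC i) * real (AA (Suc k - i)))"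
        by (simp only: AA_Suc[OF p] of_nat_sum of_nat_add of_nat_mult atLeast0AtMost sum.distrib)
      show ?thesis unfolding e e2 using \<open>n = Suc m\<close> Suc e3 by (simp add: af_def)
    qed
  qed
qed

lemma df_eq: "df = fps_X * ((df+af)*cf + cf*(df+af))"
proof (rule fps_ext)
  fix n show "fps_nth df n = fps_nth (fps_X * ((df+af)*cf + cf*(df+af))) n"
  proof (cases n)
    case 0 then show ?thesis by (simp add: df_def BB_0)
  next
    case (Suc m)
    show ?thesis
    proof (cases m)
      case 0 then show ?thesis using Suc by (simp add: af_def df_def cf_def AA_0 BB_0 BB_1[unfolded One_nat_def] fps_mult_nth)
    next
      case (Suc k)
      have e: "fps_nth (fps_X * ((df+af)*cf + cf*(df+af))) n = fps_nth ((df+af)*cf + cf*(df+af)) (Suc k)"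
        using \<open>n = Suc m\<close> Suc by simp
      have e2: "fps_nth ((df+af)*cf + cf*(df+af)) (Suc k) = (\<Sum>i=0..Suc k. (real (BB i) + real (AA i)) * real (CC (Suc k - i))) + (\<Sum>i=0..Suc k. real (CC i) * (real (BB (Suc k - i)) + real (AA (Suc k - i))))"
        by (simp only: fps_add_nth fps_mult_nth af_def df_def cf_def fps_nth_Abs_fps)
      have p: "1 \<le> Suc k" by simp
      have e3: "real (BB (Suc (Suc k))) = (\<Sum>i=0..Suc k. (real (BB i) + real (AA i)) * real (CC (Suc k - i))) + (\<Sum>i=0..Suc k. real (CC i) * (real (BB (Suc k - i)) + real (AA (Suc k - i))))"
        by (simp only: BB_Suc[OF p] of_nat_sum of_nat_add of_nat_mult atLeast0AtMost sum.distrib)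
      show ?thesis unfolding e e2 using \<open>n = Suc m\<close> Suc e3 by (simp add: df_def)
    qed
  qed
qed

definition sf :: "real fps" where "sf = 1 - 2 * fps_X * cf"

lemma sf0: "fps_nth sf 0 = 1" by (simp add: sf_def numeral_fps_const)
lemma sf_nz: "sf \<noteq> 0" using sf0 by auto

lemma sf_sq: "sf * sf = 1 - 4 * fps_X"
proof -
  have h: "fps_X * cf^2 = cf - 1" using cf_eq by (simp add: algebra_simps)
  have "sf * sf = 1 - 4 * fps_X * cf + 4 * fps_X * (fps_X * cf^2)"
    by (simp add: sf_def power2_eq_square algebra_simps)
  also have "\<dots> = 1 - 4 * fps_X"
    unfolding h by (simp add: algebra_simps)
  finally show ?thesis .
qed

lemma af_sf: "af * sf = fps_X"
proof -
  have "af * sf = af - fps_X * (af*cf + cf*af)"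
    by (simp add: sf_def algebra_simps)
  also have "\<dots> = fps_X" using af_eq by (simp add: algebra_simps)
  finally show ?thesis .
qed

lemma cb_real: "real (Suc n) * real ((2*Suc n) choose Suc n) = (4 * real n + 2) * real ((2*n) choose n)"
proof -
  have "real (Suc n * ((2*Suc n) choose Suc n)) = real ((4*n+2) * ((2*n) choose n))"
    by (simp only: cb)
  moreover have "4 * real n + 2 = real (4*n+2)" by simp
  ultimately show ?thesis by (metis of_nat_mult)
qed

lemma bf_deriv: "(1 - 4 * fps_X) * fps_deriv bf = 2 * bf"
proof -
  have e: "(1 - 4 * fps_X) * fps_deriv bf = fps_deriv bf - 4 * (fps_X * fps_deriv bf)"
    by (simp add: algebra_simps)
  show ?thesis unfolding e
  proof (rule fps_ext)
    fix n show "fps_nth (fps_deriv bf - 4 * (fps_X * fps_deriv bf)) n = fps_nth (2 * bf) n"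
    proof (cases n)
      case 0 then show ?thesis by (simp add: bf_def numeral_fps_const)
    next
      case (Suc m)
      have "real (Suc (Suc m)) * real ((2*Suc (Suc m)) choose Suc (Suc m)) = (4 * real (Suc m) + 2) * real ((2*Suc m) choose Suc m)"
        by (rule cb_real)
      then show ?thesis using Suc by (simp add: bf_def numeral_fps_const algebra_simps)
    qed
  qed
qed

lemma bf_sf: "bf * sf = 1"
proof -
  have d: "fps_deriv sf * sf + sf * fps_deriv sf = fps_const (- 4)"
    using arg_cong[OF sf_sq, of fps_deriv] by (simp add: numeral_fps_const)
  have d2: "sf * fps_deriv sf = - 2"
  proof -
    have e1: "2 * (sf * fps_deriv sf) = fps_deriv sf * sf + sf * fps_deriv sf" by (simp add: algebra_simps mult_2)
    have e2: "(2::real fps) * fps_const (-2) = fps_const (-4)" by (simp add: numeral_fps_const)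
    have "2 * (sf * fps_deriv sf) = 2 * fps_const (-2::real)" using e1 e2 d by simp
    moreover have "(2::real fps) \<noteq> 0" by simp
    ultimately have "sf * fps_deriv sf = fps_const (-2)"
      by (metis mult_left_cancel)
    then show ?thesis by (simp add: numeral_fps_const)
  qed
  have "fps_deriv (bf * sf) * sf = fps_deriv bf * (sf * sf) + bf * (sf * fps_deriv sf)"
    by (simp add: algebra_simps)
  also have "\<dots> = 0" unfolding sf_sq d2
    using bf_deriv by (simp add: algebra_simps)
  finally have "fps_deriv (bf * sf) = 0" using sf_nz by simp
  then have "bf * sf = fps_const (fps_nth (bf * sf) 0)" by (rule fps_deriv_eq_0_iff[THEN iffD1])
  also have "\<dots> = 1" using sf0 by (simp add: bf_def)
  finally show ?thesis .
qed

lemma af_X_bf: "af = fps_X * bf"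
proof -
  have "af = af * (bf * sf)" by (simp add: bf_sf)
  also have "\<dots> = (af * sf) * bf" by (simp add: algebra_simps)
  finally show ?thesis by (simp add: af_sf)
qed

lemma gf_eq: "(1 - 4 * fps_X) * gf = 1"
proof (rule fps_ext)
  fix n show "fps_nth ((1 - 4 * fps_X) * gf) n = fps_nth 1 n"
    by (cases n) (simp_all add: gf_def numeral_fps_const algebra_simps)
qed

lemma sf_gf: "sf * gf = bf"
proof -
  have "sf * (sf * gf) = sf * bf"
    by (metis gf_eq sf_sq bf_sf mult.assoc mult.commute)
  then show ?thesis using sf_nz by simp
qed

lemma df_eq2: "df = fps_X * gf - af"
proof -
  have "sf * df = af - fps_X"
  proof -
    have "df = (1 - sf) * (df + af)" using df_eq by (simp add: sf_def algebra_simps)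
    then have "sf * df = (1 - sf) * af" by (simp add: algebra_simps)
    then show ?thesis using af_sf by (simp add: algebra_simps)
  qed
  moreover have "sf * (fps_X * gf - af) = af - fps_X"
    using sf_gf af_sf af_X_bf by (simp add: algebra_simps)
  ultimately show ?thesis using sf_nz by (metis mult_left_cancel)
qed

lemma AA_closed: "n \<ge> 1 \<Longrightarrow> AA n = (2*n - 2) choose (n - 1)"
proof -
  assume "n \<ge> 1"
  then obtain m where n: "n = Suc m" by (cases n) auto
  have "fps_nth af n = fps_nth (fps_X * bf) n" by (simp add: af_X_bf)
  then have "real (AA n) = real ((2*m) choose m)" by (simp add: af_def bf_def n)
  then show ?thesis by (simp add: n)
qed

lemma BB_closed: "n \<ge> 1 \<Longrightarrow> real (BB n) = 4 ^ (n-1) - real (AA n)"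
proof -
  assume "n \<ge> 1"
  then obtain m where n: "n = Suc m" by (cases n) auto
  have "fps_nth df n = fps_nth (fps_X * gf - af) n" by (simp add: df_eq2)
  then show ?thesis by (simp add: af_def df_def gf_def n)
qed



lemma even_dfact_eq: "even_dfact m = 2^m * fact m"
  by (induction m) (simp_all add: even_dfact_def prod.nat_ivl_Suc' algebra_simps)

lemma even_odd_dfact: "even_dfact m * odd_dfact m = fact (2*m)"
proof (induction m)
  case 0 then show ?case by (simp add: even_dfact_def odd_dfact_def)
next
  case (Suc m)
  have "even_dfact (Suc m) * odd_dfact (Suc m) = (even_dfact m * odd_dfact m) * ((2*m+1) * (2*m+2))"
    by (simp add: even_dfact_def odd_dfact_def prod.nat_ivl_Suc' algebra_simps)
  also have "\<dots> = fact (2 * Suc m)" using Suc by (simp add: algebra_simps)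
  finally show ?case .
qed

definition r :: "nat \<Rightarrow> real" where "r m = 4^m / real ((2*m) choose m)"

lemma choose_pos: "((2*m) choose m) > 0" by simp

lemma dfact_r: "real (even_dfact m) / real (odd_dfact m) = r m"
proof -
  have f: "real (fact m) * real (fact m) * real ((2*m) choose m) = real (fact (2*m))"
    using binomial_fact_lemma[of m "2*m"] by (metis mult_2 add_diff_cancel_left' le_add1 of_nat_mult)
  have eo: "real (even_dfact m) * real (odd_dfact m) = real (fact (2*m))"
    by (metis even_odd_dfact of_nat_mult)
  have ev: "real (even_dfact m) = 2^m * real (fact m)" by (simp add: even_dfact_eq)
  have p1: "real (even_dfact m) > 0" "real (fact m) > 0" using ev by auto
  have p2: "real (odd_dfact m) > 0"
  proof (rule ccontr)
    assume "\<not> real (odd_dfact m) > 0"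
    then have "real (odd_dfact m) = 0" by linarith
    then have "real (fact (2*m)) = 0" using eo by simp
    then show False by simp
  qed
  note pos = p1 p2
  have p4: "(2::real)^m * 2^m = 4^m" by (simp flip: power_mult_distrib)
  have "real (even_dfact m) / real (odd_dfact m) = real (even_dfact m)^2 / (real (even_dfact m) * real (odd_dfact m))"
    using pos by (simp add: power2_eq_square field_simps)
  also have "\<dots> = (2^m * real (fact m))^2 / (real (fact m) * real (fact m) * real ((2*m) choose m))"
    unfolding eo by (simp only: f ev)
  also have "\<dots> = r m" unfolding r_def using pos p4
    by (simp add: power2_eq_square power_mult_distrib field_simps flip: power_mult[of 2 2] )
  finally show ?thesis .
qed


lemma t1: fixes a C x :: real assumes "C > 0" "x \<ge> 0"
  shows "4*a / ((4*x+2)*C/(x+1)) = a/C * (2*x+2)/(2*x+1)"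
proof -
  have "2*x+1 \<noteq> 0" "x + 1 \<noteq> 0" "4*x+2 \<noteq> 0" "C \<noteq> 0" using assms by auto
  then show ?thesis by (simp add: divide_simps) algebra
qed
lemma t2: fixes x y :: real assumes "x \<ge> 0"
  shows "(y * (2*x+2)/(2*x+1))^2 / (2*(x+1)+1) - y^2/(2*x+1) = y^2/((2*x+1)^2*(2*x+3))"
proof -
  have "2*x+1 \<noteq> 0" "2*(x+1)+1 \<noteq> 0" "2*x+3 \<noteq> 0" using assms by auto
  then show ?thesis by (simp add: divide_simps) algebra
qed
lemma t3: fixes x y :: real assumes "x \<ge> 0"
  shows "y^2 / (2*x+2) - (y * (2*(x+1)+2)/(2*(x+1)+1))^2 / (2*(x+1)+2) = y^2/((2*x+2)*(2*x+3)^2)"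
proof -
  have "2*x+2 \<noteq> 0" "2*x+3\<noteq>0" "2*(x+1)+2 \<noteq> 0" "2*(x+1)+1 \<noteq> 0" using assms by auto
  then show ?thesis by (simp add: divide_simps) algebra
qed
lemma t4: fixes x y :: real assumes "x \<ge> 0"
  shows "4*(x+1)^2/(4*(x+1)^2 - 1) * (y^2/(2*x+1)) = (y*(2*x+2)/(2*x+1))^2/(2*(x+1)+1)"
proof -
  have e: "4*(x+1)^2 - 1 = (2*x+1)*(2*x+3)" by algebra
  have "2*x+1 \<noteq> 0" "2*x+3\<noteq>0" "2*(x+1)+1 \<noteq> 0" using assms by auto
  then show ?thesis unfolding e by (simp add: divide_simps) algebra
qed
lemma t6: fixes x y :: real assumes "x \<ge> 0"
  shows "y^2/(2*x+2) = y^2/(2*(x+1)+1) * (1 + inverse (x+1) / 2)"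
proof -
  have "2*x+2 \<noteq> 0" "x+1 \<noteq> 0" "2*(x+1)+1 \<noteq> 0" using assms by auto
  then show ?thesis by (simp add: divide_simps) algebra
qed

lemma r_nonneg: "r m \<ge> 0" by (simp add: r_def)
lemma r_0: "r 0 = 1" by (simp add: r_def)

lemma rs: "real (Suc m) = real m + 1" by simp

lemma r_Suc: "r (Suc m) = r m * (2*real m + 2) / (2*real m + 1)"
proof -
  have c: "real ((2*m) choose m) > 0" by simp
  have h: "real ((2*Suc m) choose Suc m) = (4*real m+2) * real ((2*m) choose m) / real (Suc m)"
    using cb_real[of m] by (simp add: field_simps)
  have "r (Suc m) = 4*4^m / ((4*real m+2) * real ((2*m) choose m) / (real m + 1))"
    unfolding r_def h rs by simp
  also have "\<dots> = r m * (2*real m + 2) / (2*real m + 1)"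
    unfolding r_def by (rule t1) (use c in auto)
  finally show ?thesis .
qed

definition w :: "nat \<Rightarrow> real" where "w m = r m ^ 2 / (2 * real m + 1)"

lemma W_eq: "(\<Prod>k=1..m. (4*real k^2)/(4*real k^2 - 1)) = w m"
proof (induction m)
  case 0 then show ?case by (simp add: w_def r_0)
next
  case (Suc m)
  have "(\<Prod>k=1..Suc m. (4*real k^2)/(4*real k^2 - 1)) = (4*(real m+1)^2)/(4*(real m+1)^2 - 1) * w m"
    using Suc by (simp add: prod.nat_ivl_Suc' add.commute)
  also have "\<dots> = w (Suc m)" unfolding w_def r_Suc rs
    by (rule t4) simp
  finally show ?case .
qed

lemma w_lim: "w \<longlonglongrightarrow> pi / 2"
  using wallis unfolding W_eq .

lemma w_inc: "incseq w"
proof (rule incseq_SucI)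
  fix m
  have "w (Suc m) - w m = r m^2 / ((2*real m+1)^2*(2*real m+3))"
    unfolding w_def r_Suc rs by (rule t2) simp
  moreover have "r m^2 / ((2*real m+1)^2*(2*real m+3)) \<ge> 0" by simp
  ultimately show "w m \<le> w (Suc m)" by linarith
qed

lemma upper: "r m ^ 2 \<le> pi / 2 * (2 * real m + 1)"
proof -
  have "w m \<le> pi / 2" by (rule incseq_le[OF w_inc w_lim])
  moreover have "2 * real m + 1 > 0" by simp
  ultimately show ?thesis unfolding w_def by (simp add: pos_divide_le_eq)
qed

definition v :: "nat \<Rightarrow> real" where "v m = r (Suc m) ^ 2 / (2 * real m + 2)"

lemma v_dec: "decseq v"
proof (rule decseq_SucI)
  fix m
  have "v m - v (Suc m) = r (Suc m)^2 / ((2*real m+2)*(2*real m+3)^2)"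
    unfolding v_def r_Suc[of "Suc m"] rs by (rule t3) simp
  moreover have "r (Suc m)^2 / ((2*real m+2)*(2*real m+3)^2) \<ge> 0" by simp
  ultimately show "v (Suc m) \<le> v m" by linarith
qed

lemma v_lim: "v \<longlonglongrightarrow> pi / 2"
proof -
  have v_eq: "v = (\<lambda>m. w (Suc m) * (1 + inverse (real (Suc m)) / 2))"
    by (rule ext) (simp only: v_def w_def rs t6[OF of_nat_0_le_iff])
  have "(\<lambda>m. w (Suc m) * (1 + inverse (real (Suc m)) / 2)) \<longlonglongrightarrow> pi/2 * (1 + 0 / 2)"
    by (intro tendsto_intros LIMSEQ_inverse_real_of_nat w_lim[THEN LIMSEQ_Suc]) auto
  then show ?thesis unfolding v_eq by simp
qed

lemma lower: "pi * real (Suc m) \<le> r (Suc m) ^ 2"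
proof -
  have "pi / 2 \<le> v m" by (rule decseq_ge[OF v_dec v_lim])
  moreover have "2 * real m + 2 > 0" by simp
  ultimately have "pi / 2 * (2 * real m + 2) \<le> r (Suc m) ^ 2" unfolding v_def by (simp add: le_divide_eq)
  then show ?thesis by (simp add: algebra_simps)
qed

lemma abs_bound:
  fixes x q c :: real
  assumes "x \<ge> 0" "q > 0" "\<bar>x^2 - q^2\<bar> \<le> c"
  shows "\<bar>x - q\<bar> \<le> c / q"
proof -
  have "\<bar>x - q\<bar> * q \<le> \<bar>x - q\<bar> * (x + q)"
    using assms by (intro mult_left_mono) auto
  also have "\<dots> = \<bar>(x - q) * (x + q)\<bar>"
    using assms by (simp add: abs_mult)
  also have "(x - q) * (x + q) = x^2 - q^2" by (simp add: power2_eq_square algebra_simps)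
  finally have "\<bar>x - q\<bar> * q \<le> c" using assms by linarith
  then show ?thesis using assms by (simp add: field_simps)
qed



lemma exp_eq: assumes "n \<ge> 2"
  shows "card (tree_leaf_pairs n) = (2*n - 2) choose (n - 1)"
    "total_leaf_depth n = 4 ^ (n - 1) - ((2*n - 2) choose (n - 1))"
    "expected_leaf_depth n = r (n - 1) - 1"
proof -
  have n1: "n \<ge> 1" using assms by simp
  have A: "AA n = (2*n - 2) choose (n - 1)" by (rule AA_closed[OF n1])
  have B: "real (BB n) = 4 ^ (n-1) - real (AA n)" by (rule BB_closed[OF n1])
  show "card (tree_leaf_pairs n) = (2*n - 2) choose (n - 1)" using card_pairs A by simp
  have "real (BB n + AA n) = real (4 ^ (n-1))" using B by simp
  then have "BB n + AA n = 4 ^ (n-1)" by (simp only: of_nat_eq_iff)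
  then show "total_leaf_depth n = 4 ^ (n - 1) - ((2*n - 2) choose (n - 1))"
    using total_depth A by simp
  have e: "2*n - 2 = 2*(n-1)" by simp
  have pos: "real (AA n) > 0" unfolding A e by simp
  have "expected_leaf_depth n = real (BB n) / real (AA n)"
    unfolding expected_leaf_depth_def total_depth card_pairs ..
  also have "\<dots> = 4^(n-1) / real (AA n) - 1" unfolding B using pos by (simp add: field_simps)
  also have "\<dots> = r (n - 1) - 1" unfolding r_def A e ..
  finally show "expected_leaf_depth n = r (n - 1) - 1" .
qed

theorem mainTheorem16:
  shows "(\<forall>n::nat. n \<ge> 2 \<longrightarrow>
            card (tree_leaf_pairs n) = (2*n - 2) choose (n - 1)
          \<and> total_leaf_depth n = 4 ^ (n - 1) - ((2*n - 2) choose (n - 1))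
          \<and> expected_leaf_depth n
              = real (even_dfact (n - 1)) / real (odd_dfact (n - 1)) - 1)
       \<and> (\<lambda>n. expected_leaf_depth n - (sqrt (pi * real n) - 1))
            \<in> O(\<lambda>n. 1 / sqrt (real n))"
proof
  show "\<forall>n::nat. n \<ge> 2 \<longrightarrow>
            card (tree_leaf_pairs n) = (2*n - 2) choose (n - 1)
          \<and> total_leaf_depth n = 4 ^ (n - 1) - ((2*n - 2) choose (n - 1))
          \<and> expected_leaf_depth n
              = real (even_dfact (n - 1)) / real (odd_dfact (n - 1)) - 1"
    using exp_eq dfact_r by simp
  show "(\<lambda>n. expected_leaf_depth n - (sqrt (pi * real n) - 1)) \<in> O(\<lambda>n. 1 / sqrt (real n))"
  proof (rule bigoI)
    show "\<forall>\<^sub>F n in at_top. norm (expected_leaf_depth n - (sqrt (pi * real n) - 1)) \<le> 2 * norm (1 / sqrt (real n))"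
      unfolding eventually_at_top_linorder
    proof (intro exI allI impI)
      fix n :: nat assume n: "n \<ge> 2"
      then obtain k where k: "n = Suc (Suc k)" by (metis add_2_eq_Suc le_Suc_ex)
      define q where "q = sqrt (pi * real n)"
      have npos: "real n > 0" using n by simp
      have q: "q > 0" "q^2 = pi * real n" unfolding q_def using npos by (auto simp: pi_gt_zero)
      have up: "r (Suc k) ^ 2 \<le> pi / 2 * (2 * real (Suc k) + 1)" by (rule upper)
      have lo: "pi * real (Suc k) \<le> r (Suc k) ^ 2" by (rule lower)
      have "\<bar>r (Suc k) ^ 2 - q^2\<bar> \<le> pi" using up lo unfolding q(2) k by (simp add: algebra_simps)
      then have b: "\<bar>r (Suc k) - q\<bar> \<le> pi / q" using abs_bound r_nonneg q(1) by blast
      have "pi / q = sqrt pi / sqrt (real n)"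
        unfolding q_def using npos pi_gt_zero
        by (simp add: real_sqrt_mult field_simps)
      also have "\<dots> \<le> 2 / sqrt (real n)"
      proof -
        have "sqrt pi \<le> sqrt 4" using pi_less_4 by (intro real_sqrt_le_mono) simp
        then have "sqrt pi \<le> 2" by simp
        then show ?thesis using npos by (simp add: divide_right_mono)
      qed
      finally have "\<bar>r (Suc k) - q\<bar> \<le> 2 / sqrt (real n)" using b by linarith
      moreover have "expected_leaf_depth n = r (Suc k) - 1" using exp_eq(3)[OF n] k by simp
      ultimately show "norm (expected_leaf_depth n - (sqrt (pi * real n) - 1)) \<le> 2 * norm (1 / sqrt (real n))"
        unfolding q_def by simp
    qed
  qed
qed


end
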